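(* Let $G=\langle g,h\rangle$ be a non-cyclic torsion-free group. Let $G_1=\langle g_1,h_1\rangle$ and $G_2=\langle g_2,h_2\rangle$ be two copies of $G$ (with $g_i,h_i$ corresponding to $g,h$), and let $H=G_1*_{\langle g_1\rangle=\langle g_2\rangle}G_2$ be the free product with amalgamation in which $g_1$ is identified with $g_2$; write $g$ for this common element of $H$. Let $K=\langle h_2^{-1}h_1,g\rangle\le H$. Then for every nonzero $n\in\mathbb{Z}$, \[(h_2^{-1}h_1)^n\notin\langle\langle g\rangle\rangle_K.\]
   Context: $\langle\langle g\rangle\rangle_K$ denotes the normal closure of $g$ in $K$. *)

theory Defs
  imports "HOL-Algebra.Algebra"
begin

text \<open>Amalgamated free product of two copies of a group G along a subgroup S,
  the subgroup S of the first copy being identified with S in the second copy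
  via the identity map.  Realised as a presentation: words over the disjoint union
  of two copies of carrier G (letter (x,True) is x in copy 1, (x,False) is x in copy 2)
  modulo the smallest congruence (w.r.t. concatenation) identifying
  [(x,b),(y,b)] with [(x*y,b)], [(1,b)] with the empty word, and
  [(s,True)] with [(s,False)] for s in S.\<close>

inductive amal_eq :: "('a, 'b) monoid_scheme \<Rightarrow> 'a set \<Rightarrow> ('a \<times> bool) list \<Rightarrow> ('a \<times> bool) list \<Rightarrow> bool"
  for G S where
  refl: "amal_eq G S w w"
| sym: "amal_eq G S u v \<Longrightarrow> amal_eq G S v u"
| trans: "amal_eq G S u v \<Longrightarrow> amal_eq G S v w \<Longrightarrow> amal_eq G S u w"
| cong: "amal_eq G S u v \<Longrightarrow> amal_eq G S (a @ u @ c) (a @ v @ c)"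
| mult: "x \<in> carrier G \<Longrightarrow> y \<in> carrier G \<Longrightarrow> amal_eq G S [(x, b), (y, b)] [(x \<otimes>\<^bsub>G\<^esub> y, b)]"
| one: "amal_eq G S [(\<one>\<^bsub>G\<^esub>, b)] []"
| amal: "s \<in> S \<Longrightarrow> amal_eq G S [(s, True)] [(s, False)]"

definition amal_class :: "('a, 'b) monoid_scheme \<Rightarrow> 'a set \<Rightarrow> ('a \<times> bool) list \<Rightarrow> ('a \<times> bool) list set"
  where "amal_class G S w = {v. amal_eq G S w v}"

definition amal_mult :: "('a, 'b) monoid_scheme \<Rightarrow> 'a set \<Rightarrow> ('a \<times> bool) list set \<Rightarrow> ('a \<times> bool) list set \<Rightarrow> ('a \<times> bool) list set"
  where "amal_mult G S A B = {w. \<exists>u\<in>A. \<exists>v\<in>B. amal_eq G S (u @ v) w}"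

definition amalgam :: "('a, 'b) monoid_scheme \<Rightarrow> 'a set \<Rightarrow> (('a \<times> bool) list set) monoid"
  where "amalgam G S =
    \<lparr> carrier = {amal_class G S w | w. set w \<subseteq> carrier G \<times> UNIV},
      monoid.mult = amal_mult G S,
      one = amal_class G S [] \<rparr>"

definition amal_in :: "('a, 'b) monoid_scheme \<Rightarrow> 'a set \<Rightarrow> bool \<Rightarrow> 'a \<Rightarrow> ('a \<times> bool) list set"
  where "amal_in G S b x = amal_class G S [(x, b)]"

definition normal_closure_in :: "('c, 'd) monoid_scheme \<Rightarrow> 'c set \<Rightarrow> 'c \<Rightarrow> 'c set"
  where "normal_closure_in H K x =
    generate (H\<lparr>carrier := K\<rparr>) {k \<otimes>\<^bsub>H\<^esub> x \<otimes>\<^bsub>H\<^esub> inv\<^bsub>H\<^esub> k | k. k \<in> K}"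

end

theory Submission
  imports Defs
begin

locale amalW = group G for G (structure) +
  fixes C assumes sC: "subgroup C G"
begin

definition tr :: "'a \<Rightarrow> ('a \<Rightarrow> int) \<Rightarrow> ('a \<Rightarrow> int)" where
  "tr p F = (\<lambda>q. if q \<in> carrier G then F (inv p \<otimes> q) else 0)"

definition wmul :: "('a \<Rightarrow> int) \<times> 'a \<Rightarrow> ('a \<Rightarrow> int) \<times> 'a \<Rightarrow> ('a \<Rightarrow> int) \<times> 'a" where
  "wmul a b = (\<lambda>q. fst a q + tr (snd a) (fst b) q, snd a \<otimes> snd b)"

definition ind :: "'a \<Rightarrow> 'a \<Rightarrow> int" where
  "ind x = (\<lambda>q. if q \<in> carrier G \<and> inv x \<otimes> q \<in> C then 1 else 0)"

definition lett :: "'a \<times> bool \<Rightarrow> ('a \<Rightarrow> int) \<times> 'a" where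
  "lett a = (if fst a \<in> carrier G then
      (if snd a then (\<lambda>q. 0, fst a) else (\<lambda>q. ind \<one> q - ind (fst a) q, fst a))
    else (\<lambda>q. 0, \<one>))"

fun phi :: "('a \<times> bool) list \<Rightarrow> ('a \<Rightarrow> int) \<times> 'a" where
  "phi [] = (\<lambda>q. 0, \<one>)"
| "phi (a # w) = wmul (lett a) (phi w)"

definition good :: "('a \<Rightarrow> int) \<times> 'a \<Rightarrow> bool" where
  "good a \<longleftrightarrow> snd a \<in> carrier G \<and> (\<forall>q. q \<notin> carrier G \<longrightarrow> fst a q = 0)
     \<and> (\<forall>q\<in>carrier G. \<forall>c\<in>C. fst a (q \<otimes> c) = fst a q)"

lemma C_carr: "c \<in> C \<Longrightarrow> c \<in> carrier G"
  by (rule subgroup.mem_carrier[OF sC])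

lemma wmul_assoc:
  assumes "good a" "good b" "good c"
  shows "wmul (wmul a b) c = wmul a (wmul b c)"
proof -
  have p: "snd a \<in> carrier G" "snd b \<in> carrier G" "snd c \<in> carrier G"
    using assms unfolding good_def by auto
  have "tr (snd a \<otimes> snd b) (fst c) q = tr (snd a) (tr (snd b) (fst c)) q" for q
  proof (cases "q \<in> carrier G")
    case True
    have "inv (snd a \<otimes> snd b) \<otimes> q = inv (snd b) \<otimes> (inv (snd a) \<otimes> q)"
      using p True by (simp add: inv_mult_group m_assoc)
    then show ?thesis using True p unfolding tr_def by simp
  next
    case False
    then show ?thesis unfolding tr_def by simp
  qed
  moreover have "tr (snd a) (\<lambda>q. fst b q + tr (snd b) (fst c) q) q = tr (snd a) (fst b) q + tr (snd a) (tr (snd b) (fst c)) q" for q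
    unfolding tr_def by simp
  ultimately show ?thesis unfolding wmul_def using p by (simp add: m_assoc fun_eq_iff)
qed

lemma good_wmul: assumes "good a" "good b" shows "good (wmul a b)"
proof -
  have "fst b (inv (snd a) \<otimes> (q \<otimes> c)) = fst b (inv (snd a) \<otimes> q)" if "q \<in> carrier G" "c \<in> C" for q c
    using assms that C_carr unfolding good_def by (metis inv_closed m_assoc m_closed)
  then show ?thesis using assms C_carr unfolding good_def wmul_def tr_def by auto
qed

lemma good_ind: "(\<forall>q. q \<notin> carrier G \<longrightarrow> ind x q = 0) \<and> (\<forall>q\<in>carrier G. \<forall>c\<in>C. ind x (q \<otimes> c) = ind x q)"
  if "x \<in> carrier G"
proof -
  have "inv x \<otimes> (q \<otimes> c) \<in> C \<longleftrightarrow> inv x \<otimes> q \<in> C" if "q \<in> carrier G" "c \<in> C" for q c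
  proof -
    have e: "inv x \<otimes> (q \<otimes> c) = (inv x \<otimes> q) \<otimes> c" using that C_carr \<open>x \<in> carrier G\<close> by (simp add: m_assoc)
    show ?thesis unfolding e using that sC C_carr \<open>x \<in> carrier G\<close>
      by (metis inv_closed m_closed subgroup.m_closed subgroup.m_inv_closed inv_solve_right)
  qed
  then show ?thesis using that C_carr unfolding ind_def by auto
qed

lemma good_lett: "good (lett a)"
  using good_ind[of \<one>] good_ind[of "fst a"] unfolding good_def lett_def by auto

lemma good_unit: "good (\<lambda>q. 0, \<one>)"
  unfolding good_def by auto

lemma good_phi: "good (phi w)"
proof (induction w)
  case Nil show ?case using good_unit by simp
next
  case (Cons a w) thus ?case by (simp add: good_wmul good_lett)
qed

lemma wmul_unit_left: "good a \<Longrightarrow> wmul (\<lambda>q. 0, \<one>) a = a"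
  unfolding good_def wmul_def tr_def by (auto simp: fun_eq_iff prod_eq_iff)

lemma wmul_unit_right: "good a \<Longrightarrow> wmul a (\<lambda>q. 0, \<one>) = a"
  unfolding good_def wmul_def tr_def by (auto simp: fun_eq_iff prod_eq_iff)

lemma phi_append: "phi (u @ v) = wmul (phi u) (phi v)"
  by (induction u) (auto simp: wmul_unit_left good_phi wmul_assoc good_lett)

lemma lett_mult:
  assumes "x \<in> carrier G" "y \<in> carrier G"
  shows "wmul (lett (x, b)) (lett (y, b)) = lett (x \<otimes> y, b)"
proof (cases b)
  case True then show ?thesis using assms unfolding lett_def wmul_def tr_def by (auto simp: fun_eq_iff)
next
  case False
  have "ind \<one> (inv x \<otimes> q) = ind x q" if "q \<in> carrier G" for q
    using that assms unfolding ind_def by auto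
  moreover have "ind y (inv x \<otimes> q) = ind (x \<otimes> y) q" if "q \<in> carrier G" for q
    using that assms unfolding ind_def by (auto simp: inv_mult_group m_assoc)
  moreover have "ind z q = 0" if "q \<notin> carrier G" for z q using that unfolding ind_def by auto
  ultimately show ?thesis using assms False unfolding lett_def wmul_def tr_def by (auto simp: fun_eq_iff)
qed

lemma amal_eq_phi: "amal_eq G C u v \<Longrightarrow> phi u = phi v"
proof (induction rule: amal_eq.induct)
  case (cong u v a c)
  then show ?case by (simp add: phi_append)
next
  case (mult x y b)
  then show ?case by (simp add: wmul_unit_right good_lett lett_mult)
next
  case (one b)
  then show ?case by (simp add: wmul_unit_right good_lett lett_def wmul_unit_left good_unit)
next
  case (amal s)
  have "ind s q = ind \<one> q" for q
    using amal sC C_carr unfolding ind_def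
    by (metis inv_closed inv_one l_one m_closed subgroup.m_closed subgroup.m_inv_closed inv_solve_left)
  then show ?case using amal C_carr by (simp add: wmul_unit_right good_lett lett_def)
qed auto


abbreviation cls :: "('a \<times> bool) list \<Rightarrow> ('a \<times> bool) list set" where
  "cls w \<equiv> amal_class G C w"

abbreviation HH where "HH \<equiv> amalgam G C"

lemma amal_eq_append: "amal_eq G C u u' \<Longrightarrow> amal_eq G C v v' \<Longrightarrow> amal_eq G C (u @ v) (u' @ v')"
  using amal_eq.cong[of G C u u' "[]" v] amal_eq.cong[of G C v v' u' "[]"] amal_eq.trans by fastforce

lemma mem_cls: "v \<in> cls u \<longleftrightarrow> amal_eq G C u v"
  unfolding amal_class_def by simp

lemma cls_eq: "cls u = cls v \<longleftrightarrow> amal_eq G C u v"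
proof
  assume e: "cls u = cls v"
  have "v \<in> cls v" by (simp add: mem_cls amal_eq.refl)
  then have "v \<in> cls u" using e by simp
  then show "amal_eq G C u v" by (simp add: mem_cls)
next
  assume a: "amal_eq G C u v"
  show "cls u = cls v"
  proof (rule Set.set_eqI)
    fix x
    show "x \<in> cls u \<longleftrightarrow> x \<in> cls v"
      unfolding mem_cls using a amal_eq.sym[OF a] amal_eq.trans by metis
  qed
qed

lemma mult_cls_iff: "x \<in> amal_mult G C (cls u) (cls v) \<longleftrightarrow> amal_eq G C (u @ v) x"
proof
  assume "x \<in> amal_mult G C (cls u) (cls v)"
  then obtain u' v' where uv: "amal_eq G C u u'" "amal_eq G C v v'" "amal_eq G C (u' @ v') x"
    unfolding amal_mult_def mem_Collect_eq Bex_def mem_cls by blast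
  have "amal_eq G C (u @ v) (u' @ v')" using uv(1,2) by (rule amal_eq_append)
  then show "amal_eq G C (u @ v) x" using uv(3) by (rule amal_eq.trans)
next
  assume a: "amal_eq G C (u @ v) x"
  show "x \<in> amal_mult G C (cls u) (cls v)"
    unfolding amal_mult_def mem_Collect_eq Bex_def mem_cls
    using amal_eq.refl[of G C u] amal_eq.refl[of G C v] a by blast
qed

lemma mult_cls0: "amal_mult G C (cls u) (cls v) = cls (u @ v)"
proof (rule Set.set_eqI)
  fix x
  show "x \<in> amal_mult G C (cls u) (cls v) \<longleftrightarrow> x \<in> cls (u @ v)"
    unfolding mult_cls_iff mem_cls by (rule HOL.refl)
qed

lemma mult_cls: "cls u \<otimes>\<^bsub>HH\<^esub> cls v = cls (u @ v)"
  by (simp add: amalgam_def mult_cls0)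

lemma one_H: "\<one>\<^bsub>HH\<^esub> = cls []" unfolding amalgam_def by simp

lemma carrier_H: "carrier HH = {cls w | w. set w \<subseteq> carrier G \<times> UNIV}"
  unfolding amalgam_def by simp

lemma cls_carrier: "set w \<subseteq> carrier G \<times> UNIV \<Longrightarrow> cls w \<in> carrier HH"
  unfolding carrier_H by auto

definition winv :: "('a \<times> bool) list \<Rightarrow> ('a \<times> bool) list" where
  "winv w = rev (map (\<lambda>(x, b). (inv x, b)) w)"

lemma winv_eq: "set w \<subseteq> carrier G \<times> UNIV \<Longrightarrow> amal_eq G C (winv w @ w) []"
proof (induction w)
  case Nil then show ?case by (simp add: winv_def amal_eq.refl)
next
  case (Cons a w)
  obtain x b where a: "a = (x, b)" by force
  have x: "x \<in> carrier G" using Cons.prems a by auto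
  have 1: "amal_eq G C [(inv x, b), (x, b)] []"
    using amal_eq.mult[of "inv x" G x C b] amal_eq.one[of G C b] x amal_eq.trans by fastforce
  have "amal_eq G C (winv w @ [(inv x, b), (x, b)] @ w) (winv w @ [] @ w)"
    by (rule amal_eq.cong[OF 1])
  moreover have "winv (a # w) @ a # w = winv w @ [(inv x, b), (x, b)] @ w"
    by (simp add: winv_def a)
  ultimately show ?case using Cons amal_eq.trans by fastforce
qed

lemma group_H: "group HH"
proof (rule groupI)
  fix x y assume "x \<in> carrier HH" "y \<in> carrier HH"
  then obtain u v where "x = cls u" "y = cls v" "set u \<subseteq> carrier G \<times> UNIV" "set v \<subseteq> carrier G \<times> UNIV"
    unfolding carrier_H by auto
  then have "x \<otimes>\<^bsub>HH\<^esub> y = cls (u @ v) \<and> set (u @ v) \<subseteq> carrier G \<times> UNIV" by (simp add: mult_cls)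
  then show "x \<otimes>\<^bsub>HH\<^esub> y \<in> carrier HH" unfolding carrier_H by blast
next
  show "\<one>\<^bsub>HH\<^esub> \<in> carrier HH" unfolding carrier_H one_H by auto
next
  fix x y z assume "x \<in> carrier HH" "y \<in> carrier HH" "z \<in> carrier HH"
  then show "x \<otimes>\<^bsub>HH\<^esub> y \<otimes>\<^bsub>HH\<^esub> z = x \<otimes>\<^bsub>HH\<^esub> (y \<otimes>\<^bsub>HH\<^esub> z)"
    unfolding carrier_H by (auto simp: mult_cls)
next
  fix x assume "x \<in> carrier HH"
  then show "\<one>\<^bsub>HH\<^esub> \<otimes>\<^bsub>HH\<^esub> x = x" unfolding carrier_H one_H by (auto simp: mult_cls)
next
  fix x assume "x \<in> carrier HH"
  then obtain w where w: "x = cls w" "set w \<subseteq> carrier G \<times> UNIV" unfolding carrier_H by auto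
  have "set (winv w) \<subseteq> carrier G \<times> UNIV" using w(2) unfolding winv_def by auto
  moreover have "cls (winv w) \<otimes>\<^bsub>HH\<^esub> x = \<one>\<^bsub>HH\<^esub>"
    unfolding w one_H mult_cls cls_eq using winv_eq[OF w(2)] .
  ultimately show "\<exists>y\<in>carrier HH. y \<otimes>\<^bsub>HH\<^esub> x = \<one>\<^bsub>HH\<^esub>" unfolding carrier_H by blast
qed

definition PhiH :: "('a \<times> bool) list set \<Rightarrow> ('a \<Rightarrow> int) \<times> 'a" where
  "PhiH XX = phi (SOME w. w \<in> XX)"

lemma PhiH_cls: "PhiH (cls w) = phi w"
proof -
  have "w \<in> cls w" by (simp add: mem_cls amal_eq.refl)
  then have "(SOME v. v \<in> cls w) \<in> cls w" by (rule someI)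
  then show ?thesis unfolding PhiH_def mem_cls by (metis amal_eq_phi)
qed

lemma PhiH_mult: "XX \<in> carrier HH \<Longrightarrow> YY \<in> carrier HH \<Longrightarrow> PhiH (XX \<otimes>\<^bsub>HH\<^esub> YY) = wmul (PhiH XX) (PhiH YY)"
  unfolding carrier_H by (auto simp: mult_cls PhiH_cls phi_append)

lemma good_PhiH: "XX \<in> carrier HH \<Longrightarrow> good (PhiH XX)"
  unfolding carrier_H by (auto simp: PhiH_cls good_phi)

lemma PhiH_one: "PhiH \<one>\<^bsub>HH\<^esub> = (\<lambda>q. 0, \<one>)"
  by (simp add: one_H PhiH_cls)

definition chi :: "('a \<times> bool) list set \<Rightarrow> int" where
  "chi XX = fst (PhiH XX) \<one>"

lemma chi_mult:
  assumes "XX \<in> carrier HH" "YY \<in> carrier HH" "snd (PhiH XX) \<in> C"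
  shows "chi (XX \<otimes>\<^bsub>HH\<^esub> YY) = chi XX + chi YY"
proof -
  have gY: "good (PhiH YY)" using good_PhiH assms by blast
  have "inv (snd (PhiH XX)) \<in> C" using assms sC subgroup.m_inv_closed by fastforce
  then have "fst (PhiH YY) (\<one> \<otimes> inv (snd (PhiH XX))) = fst (PhiH YY) \<one>"
    using gY unfolding good_def by blast
  then show ?thesis using assms C_carr unfolding chi_def PhiH_mult[OF assms(1,2)] wmul_def tr_def
    by simp
qed

lemma snd_PhiH_inv:
  assumes "XX \<in> carrier HH"
  shows "snd (PhiH (inv\<^bsub>HH\<^esub> XX)) = inv (snd (PhiH XX))"
proof -
  interpret H: group HH by (rule group_H)
  have ic: "inv\<^bsub>HH\<^esub> XX \<in> carrier HH" using assms by simp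
  have "wmul (PhiH (inv\<^bsub>HH\<^esub> XX)) (PhiH XX) = PhiH (inv\<^bsub>HH\<^esub> XX \<otimes>\<^bsub>HH\<^esub> XX)"
    using PhiH_mult[OF ic assms] by simp
  also have "\<dots> = (\<lambda>q. 0, \<one>)" using assms by (simp add: PhiH_one)
  finally have "snd (PhiH (inv\<^bsub>HH\<^esub> XX)) \<otimes> snd (PhiH XX) = \<one>"
    unfolding wmul_def by simp
  moreover have "snd (PhiH (inv\<^bsub>HH\<^esub> XX)) \<in> carrier G" "snd (PhiH XX) \<in> carrier G"
    using good_PhiH[OF ic] good_PhiH[OF assms] unfolding good_def by auto
  ultimately show ?thesis by (simp add: inv_equality)
qed

definition SS where "SS = {k \<in> carrier HH. snd (PhiH k) \<in> C}"

lemma subgroup_SS: "subgroup SS HH"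
proof -
  interpret H: group HH by (rule group_H)
  show ?thesis
  proof
    show "SS \<subseteq> carrier HH" unfolding SS_def by auto
  next
    fix x y assume "x \<in> SS" "y \<in> SS"
    then show "x \<otimes>\<^bsub>HH\<^esub> y \<in> SS" unfolding SS_def using sC
      by (auto simp: PhiH_mult wmul_def subgroup.m_closed)
  next
    show "\<one>\<^bsub>HH\<^esub> \<in> SS" unfolding SS_def using sC by (simp add: PhiH_one subgroup.one_closed)
  next
    fix x assume "x \<in> SS"
    then show "inv\<^bsub>HH\<^esub> x \<in> SS" unfolding SS_def using sC
      by (auto simp: snd_PhiH_inv subgroup.m_inv_closed)
  qed
qed

lemma chi_inv:
  assumes "XX \<in> SS" shows "chi (inv\<^bsub>HH\<^esub> XX) = - chi XX"
proof -
  interpret H: group HH by (rule group_H)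
  have i: "inv\<^bsub>HH\<^esub> XX \<in> SS" by (rule subgroup.m_inv_closed[OF subgroup_SS assms])
  have "chi (inv\<^bsub>HH\<^esub> XX \<otimes>\<^bsub>HH\<^esub> XX) = chi (inv\<^bsub>HH\<^esub> XX) + chi XX"
    using i assms unfolding SS_def by (intro chi_mult) auto
  moreover have "chi (inv\<^bsub>HH\<^esub> XX \<otimes>\<^bsub>HH\<^esub> XX) = 0"
    using assms unfolding SS_def by (simp add: chi_def PhiH_one)
  ultimately show ?thesis by simp
qed

lemma SS_pow:
  assumes "XX \<in> SS" shows "XX [^]\<^bsub>HH\<^esub> (m::nat) \<in> SS"
proof (induction m)
  case 0 then show ?case using subgroup.one_closed[OF subgroup_SS] by simp
next
  case (Suc m)
  then show ?case using subgroup.m_closed[OF subgroup_SS Suc assms] by simp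
qed

lemma chi_pow_nat:
  assumes "XX \<in> SS" shows "chi (XX [^]\<^bsub>HH\<^esub> (m::nat)) = int m * chi XX"
proof (induction m)
  case 0 then show ?case by (simp add: chi_def PhiH_one)
next
  case (Suc m)
  have p: "XX [^]\<^bsub>HH\<^esub> m \<in> SS" by (rule SS_pow[OF assms])
  have "chi (XX [^]\<^bsub>HH\<^esub> Suc m) = chi (XX [^]\<^bsub>HH\<^esub> m \<otimes>\<^bsub>HH\<^esub> XX)" by simp
  also have "\<dots> = chi (XX [^]\<^bsub>HH\<^esub> m) + chi XX"
    using p assms unfolding SS_def by (intro chi_mult) auto
  finally show ?case using Suc by (simp add: algebra_simps)
qed

lemma chi_pow_int:
  assumes "XX \<in> SS" shows "chi (XX [^]\<^bsub>HH\<^esub> (n::int)) = n * chi XX"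
proof (cases "n < 0")
  case True
  have "XX [^]\<^bsub>HH\<^esub> n = inv\<^bsub>HH\<^esub> (XX [^]\<^bsub>HH\<^esub> (nat (- n)))"
    using True by (simp only: int_pow_def2 if_True)
  then show ?thesis using True chi_pow_nat[OF assms, of "nat (- n)"] chi_inv[OF SS_pow[OF assms], of "nat (- n)"]
    by simp
next
  case False
  have "XX [^]\<^bsub>HH\<^esub> n = XX [^]\<^bsub>HH\<^esub> (nat n)"
    using False by (simp only: int_pow_def2 if_False)
  then show ?thesis using False chi_pow_nat[OF assms, of "nat n"] by simp
qed

end

context amalW begin

lemma main:
  assumes gC: "g \<in> C" and hc: "h \<in> carrier G" and hC: "h \<notin> C"
  shows "\<forall>n::int. n \<noteq> 0 \<longrightarrow>
    (inv\<^bsub>HH\<^esub> (cls [(h,False)]) \<otimes>\<^bsub>HH\<^esub> cls [(h,True)]) [^]\<^bsub>HH\<^esub> n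
      \<notin> normal_closure_in HH (generate HH {inv\<^bsub>HH\<^esub> (cls [(h,False)]) \<otimes>\<^bsub>HH\<^esub> cls [(h,True)], cls [(g,True)]}) (cls [(g,True)])"
proof -
  interpret H: group HH by (rule group_H)
  have gc: "g \<in> carrier G" by (rule C_carr[OF gC])
  have one_C: "\<one> \<in> C" by (rule subgroup.one_closed[OF sC])
  have invh: "inv\<^bsub>HH\<^esub> (cls [(h,False)]) = cls [(inv h, False)]"
  proof (rule H.inv_equality)
    have "amal_eq G C [(inv h, False), (h, False)] []"
      using amal_eq.mult[of "inv h" G h C False] amal_eq.one[of G C False] hc amal_eq.trans by fastforce
    then show "cls [(inv h, False)] \<otimes>\<^bsub>HH\<^esub> cls [(h, False)] = \<one>\<^bsub>HH\<^esub>"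
      by (simp add: mult_cls one_H cls_eq)
    show "cls [(h, False)] \<in> carrier HH" using hc by (intro cls_carrier) simp
    show "cls [(inv h, False)] \<in> carrier HH" using hc by (intro cls_carrier) simp
  qed
  define t where "t = cls [(inv h, False), (h, True)]"
  have teq: "inv\<^bsub>HH\<^esub> (cls [(h,False)]) \<otimes>\<^bsub>HH\<^esub> cls [(h,True)] = t"
    unfolding invh t_def by (simp add: mult_cls)
  define gg where "gg = cls [(g, True)]"
  have tc: "t \<in> carrier HH" using hc unfolding t_def by (intro cls_carrier) simp
  have ggc: "gg \<in> carrier HH" using gc unfolding gg_def by (intro cls_carrier) simp
  have tS: "t \<in> SS" using tc hc one_C unfolding SS_def t_def
    by (simp add: PhiH_cls wmul_def lett_def)
  have ggS: "gg \<in> SS" using ggc gc gC unfolding SS_def gg_def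
    by (simp add: PhiH_cls wmul_def lett_def)
  have chit: "chi t = 1" using hc hC one_C unfolding t_def chi_def
    by (simp add: PhiH_cls wmul_def lett_def tr_def ind_def)
  have chig: "chi gg = 0" using gc unfolding gg_def chi_def
    by (simp add: PhiH_cls wmul_def lett_def tr_def)
  define K where "K = generate HH {t, gg}"
  have subK: "subgroup K HH" unfolding K_def using tc ggc by (intro H.generate_is_subgroup) auto
  have KS: "K \<subseteq> SS" unfolding K_def using tS ggS subgroup_SS by (intro H.generate_subgroup_incl) auto
  have KH: "K \<subseteq> carrier HH" by (rule subgroup.subset[OF subK])
  have conjK: "x \<in> K \<and> chi x = 0" if xin: "x \<in> {k \<otimes>\<^bsub>HH\<^esub> gg \<otimes>\<^bsub>HH\<^esub> inv\<^bsub>HH\<^esub> k | k. k \<in> K}" for x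
  proof -
    obtain k where k: "k \<in> K" "x = k \<otimes>\<^bsub>HH\<^esub> gg \<otimes>\<^bsub>HH\<^esub> inv\<^bsub>HH\<^esub> k" using xin by blast
    have ggK: "gg \<in> K" unfolding K_def by (simp add: generate.incl)
    have ikK: "inv\<^bsub>HH\<^esub> k \<in> K" by (rule subgroup.m_inv_closed[OF subK k(1)])
    have kgK: "k \<otimes>\<^bsub>HH\<^esub> gg \<in> K" by (rule subgroup.m_closed[OF subK k(1) ggK])
    have xK: "x \<in> K" unfolding k(2) by (rule subgroup.m_closed[OF subK kgK ikK])
    have "chi x = chi (k \<otimes>\<^bsub>HH\<^esub> gg) + chi (inv\<^bsub>HH\<^esub> k)"
      unfolding k(2) using kgK ikK KS KH unfolding SS_def by (intro chi_mult) auto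
    also have "\<dots> = chi k + chi gg + chi (inv\<^bsub>HH\<^esub> k)"
      using k ggK KS KH unfolding SS_def by (subst chi_mult) auto
    also have "\<dots> = 0" using chig chi_inv k KS by auto
    finally show ?thesis using xK by simp
  qed
  have N: "x \<in> K \<and> chi x = 0" if "x \<in> normal_closure_in HH K gg" for x
    using that unfolding normal_closure_in_def
  proof (induction rule: generate.induct)
    case one
    show ?case using subgroup.one_closed[OF subK] by (simp add: chi_def PhiH_one)
  next
    case (incl h)
    then show ?case by (rule conjK)
  next
    case (inv h)
    then have hh: "h \<in> K \<and> chi h = 0" by (rule conjK)
    have "inv\<^bsub>HH\<lparr>carrier := K\<rparr>\<^esub> h = inv\<^bsub>HH\<^esub> h" using H.m_inv_consistent[OF subK] hh by simp
    moreover have "inv\<^bsub>HH\<^esub> h \<in> K" using subgroup.m_inv_closed[OF subK] hh by simp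
    moreover have "chi (inv\<^bsub>HH\<^esub> h) = 0" using chi_inv[of h] hh KS by auto
    ultimately show ?case by simp
  next
    case (eng h1 h2)
    have m: "h1 \<otimes>\<^bsub>HH\<lparr>carrier := K\<rparr>\<^esub> h2 = h1 \<otimes>\<^bsub>HH\<^esub> h2" by simp
    have "h1 \<otimes>\<^bsub>HH\<^esub> h2 \<in> K" using subgroup.m_closed[OF subK] eng.IH by simp
    moreover have "chi (h1 \<otimes>\<^bsub>HH\<^esub> h2) = chi h1 + chi h2"
      using eng.IH KS KH unfolding SS_def by (intro chi_mult) auto
    ultimately show ?case using eng.IH m by simp
  qed
  show ?thesis
  proof (intro allI impI)
    fix n :: int assume "n \<noteq> 0"
    have "chi (t [^]\<^bsub>HH\<^esub> n) = n" using chi_pow_int[OF tS] chit by simp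
    show "(inv\<^bsub>HH\<^esub> (cls [(h,False)]) \<otimes>\<^bsub>HH\<^esub> cls [(h,True)]) [^]\<^bsub>HH\<^esub> n
      \<notin> normal_closure_in HH (generate HH {inv\<^bsub>HH\<^esub> (cls [(h,False)]) \<otimes>\<^bsub>HH\<^esub> cls [(h,True)], cls [(g,True)]}) (cls [(g,True)])"
      unfolding teq gg_def[symmetric] K_def[symmetric]
    proof
      assume "t [^]\<^bsub>HH\<^esub> n \<in> normal_closure_in HH K gg"
      then have "chi (t [^]\<^bsub>HH\<^esub> n) = 0" using N by simp
      then show False using \<open>chi (t [^]\<^bsub>HH\<^esub> n) = n\<close> \<open>n \<noteq> 0\<close> by simp
    qed
  qed
qed

end


theorem lemma3p3:
  fixes G :: "('a, 'b) monoid_scheme" and g h :: 'a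
    and H :: "(('a \<times> bool) list set) monoid"
    and gH h1 h2 :: "('a \<times> bool) list set" and K :: "('a \<times> bool) list set set"
  assumes grp: "group G"
    and gh: "g \<in> carrier G" "h \<in> carrier G"
    and gen: "carrier G = generate G {g, h}"
    and noncyclic: "\<not> (\<exists>x \<in> carrier G. carrier G = generate G {x})"
    and torsion_free: "\<forall>x \<in> carrier G. \<forall>n::nat. n > 0 \<longrightarrow> x [^]\<^bsub>G\<^esub> n = \<one>\<^bsub>G\<^esub> \<longrightarrow> x = \<one>\<^bsub>G\<^esub>"
    and H_def: "H = amalgam G (generate G {g})"
    and gH_def: "gH = amal_in G (generate G {g}) True g"
    and h1_def: "h1 = amal_in G (generate G {g}) True h"
    and h2_def: "h2 = amal_in G (generate G {g}) False h"
    and K_def: "K = generate H {inv\<^bsub>H\<^esub> h2 \<otimes>\<^bsub>H\<^esub> h1, gH}"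
  shows "\<forall>n::int. n \<noteq> 0 \<longrightarrow>
           (inv\<^bsub>H\<^esub> h2 \<otimes>\<^bsub>H\<^esub> h1) [^]\<^bsub>H\<^esub> n \<notin> normal_closure_in H K gH"
proof -
  let ?C = "generate G {g}"
  interpret G: group G by (rule grp)
  have sC: "subgroup ?C G" using gh by (intro G.generate_is_subgroup) auto
  interpret A: amalW G ?C by (rule amalW.intro[OF grp amalW_axioms.intro[OF sC]])
  have gC: "g \<in> ?C" by (rule generate.incl) simp
  have hC: "h \<notin> ?C"
  proof
    assume "h \<in> ?C"
    then have "{g, h} \<subseteq> ?C" using gC by auto
    then have "generate G {g, h} \<subseteq> ?C" by (rule G.generate_subgroup_incl[OF _ sC])
    moreover have "?C \<subseteq> carrier G" using gh by (intro G.generate_incl) auto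
    ultimately have "carrier G = ?C" using gen by auto
    then show False using noncyclic gh(1) by auto
  qed
  show ?thesis using A.main[OF gC gh(2) hC]
    unfolding K_def H_def gH_def h1_def h2_def amal_in_def .
qed

end
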